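(* Let $\mathbb Y=\mathbb R^m$, $g\colon\mathbb X\to\mathbb R^m$ twice continuously differentiable, $D\subset\mathbb R^m$ closed and polyhedral locally around $g(\bar x)$, $\Phi(x):=g(x)-D$, $(\bar x,0)\in\operatorname{gph}\Phi$, $u\in\mathbb S_{\mathbb X}$, and assume SOSCMS$(u)$: every $y^*\in\mathcal N_D(g(\bar x);\nabla g(\bar x)u)$ with $\nabla g(\bar x)^*y^*=0$ and $\nabla^2\langle y^*,g\rangle(\bar x)[u,u]\ge0$ satisfies $y^*=0$. Let $K:=\mathcal N_{\mathcal T_D(g(\bar x))}(\nabla g(\bar x)u)$, $\mathbf T(u):=\mathcal T_{\mathcal T_D(g(\bar x))}(\nabla g(\bar x)u)$, $w_s(u,v):=\nabla g(\bar x)s+\tfrac12\nabla^2g(\bar x)[u,u]-v$. Then: (i) For each $s\in\mathbb X$, $\nabla g(\bar x)^*y^*=0$, $\nabla^2\langle y^*,g\rangle(\bar x)(u)+\nabla g(\bar x)^*z^*=0$, $y^*\in\mathcal N_{\mathbf T(u)}(w_s(u,0))$, $z^*\in\mathcal T_{\mathcal N_{\mathbf T(u)}(w_s(u,0))}(y^* )$ imply $y^*=0$; and for all $x^*,s\in\mathbb X$, $y^*,z^*,v\in\mathbb R^m$ with $\langle y^*,v\rangle\ge0$, $x^*=\nabla^2\langle y^*,g\rangle(\bar x)(u)+\nabla g(\bar x)^*z^*$, $y^*\in\mathcal N_{\mathbf T(u)}(w_s(u,v))\cap\ker\nabla g(\bar x)^*$, $z^*\in\mathcal T_{\mathcal N_{\mathbf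 T(u)}(w_s(u,v))}(y^* )$, there is $\lambda\in K$ with $x^*=\nabla g(\bar x)^*\lambda$. (ii) $\nabla g(\bar x)^*y^*=0$, $\nabla^2\langle y^*,g\rangle(\bar x)(u)+\nabla g(\bar x)^*z^*=0$, $y^*\in K$, $z^*\in\mathcal T_K(y^* )$ imply $y^*=0$; and for all $x^*\in\mathbb X$ with $\langle x^*,u\rangle\ge0$ and $y^*,z^*\in\mathbb R^m$ with $x^*=\nabla^2\langle y^*,g\rangle(\bar x)(u)+\nabla g(\bar x)^*z^*$, $y^*\in K\cap\ker\nabla g(\bar x)^*$, $z^*\in\mathcal T_K(y^* )$, there is $\lambda\in K$ (hence $\lambda\in\mathcal N_D(g(\bar x))$) with $x^*=\nabla g(\bar x)^*\lambda$.
   Context: $D$ polyhedral locally around $y$: $D\cap V$ is a finite union of convex polyhedra for some neighbourhood $V$ of $y$. $\mathcal T_Q$ Bouligand tangent cone, $\mathcal N_Q$ limiting normal cone, $\mathcal N_D(y;w)$ directional limiting normal cone (limits of $\eta_k\in\widehat{\mathcal N}_D(y+t_kw_k)$ with $w_k\to w$, $t_k\searrow0$). $\nabla^2\langle y^*,g\rangle(\bar x)$ Hessian of $x\mapsto\langle y^*,g(x)\rangle$; $\nabla^2\langle y^*,g\rangle(\bar x)[u,u]=\langle u,\nabla^2\langle y^*,g\rangle(\bar x)u\rangle$; $\nabla^2g(\bar x)[u,u]=\sum_i\langle u,\nabla^2\langle e_i,g\rangle(\bar x)u\rangle e_i$. *)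

theory Defs
  imports "HOL-Analysis.Analysis"
begin

definition bouligand_tangent_cone :: "'a::real_normed_vector set \<Rightarrow> 'a \<Rightarrow> 'a set" where
  "bouligand_tangent_cone Q x =
     {w. \<exists>t wk. (\<forall>k. t k > (0::real)) \<and> t \<longlonglongrightarrow> 0 \<and> wk \<longlonglongrightarrow> w
                \<and> (\<forall>k. x + t k *\<^sub>R wk k \<in> Q)}"

definition frechet_normal_cone :: "'a::real_inner set \<Rightarrow> 'a \<Rightarrow> 'a set" where
  "frechet_normal_cone Q x =
     {\<eta>. x \<in> Q \<and> (\<forall>\<epsilon>>0. \<exists>\<delta>>0. \<forall>x'\<in>Q. norm (x' - x) < \<delta> \<longrightarrow>
                 \<eta> \<bullet> (x' - x) \<le> \<epsilon> * norm (x' - x))}"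

definition limiting_normal_cone :: "'a::real_inner set \<Rightarrow> 'a \<Rightarrow> 'a set" where
  "limiting_normal_cone Q x =
     {\<eta>. x \<in> Q \<and> (\<exists>xk \<eta>k. (\<forall>k. \<eta>k k \<in> frechet_normal_cone Q (xk k))
                \<and> xk \<longlonglongrightarrow> x \<and> \<eta>k \<longlonglongrightarrow> \<eta>)}"

definition dir_limiting_normal_cone :: "'a::real_inner set \<Rightarrow> 'a \<Rightarrow> 'a \<Rightarrow> 'a set" where
  "dir_limiting_normal_cone Q y w =
     {\<eta>. \<exists>t wk \<eta>k. (\<forall>k. t k > (0::real)) \<and> t \<longlonglongrightarrow> 0 \<and> wk \<longlonglongrightarrow> w
          \<and> (\<forall>k. \<eta>k k \<in> frechet_normal_cone Q (y + t k *\<^sub>R wk k)) \<and> \<eta>k \<longlonglongrightarrow> \<eta>}"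

definition locally_polyhedral_at :: "'a::euclidean_space set \<Rightarrow> 'a \<Rightarrow> bool" where
  "locally_polyhedral_at D y \<longleftrightarrow>
     (\<exists>V \<F>. open V \<and> y \<in> V \<and> finite \<F> \<and> (\<forall>P\<in>\<F>. polyhedron P) \<and> D \<inter> V = \<Union>\<F>)"

text \<open>For a second derivative H (bilinear, as nested bounded linear maps) and a
  multiplier y, the vector the Hessian of <y,g> at x applied to u \<in> X, i.e. the Riesz representative of
  w \<mapsto> \<langle>y, H[w,u]\<rangle>.\<close>
definition hess_lag_apply ::
  "('a::euclidean_space \<Rightarrow>\<^sub>L ('a \<Rightarrow>\<^sub>L 'b::real_inner)) \<Rightarrow> 'b \<Rightarrow> 'a \<Rightarrow> 'a" where
  "hess_lag_apply H y u = (\<Sum>i\<in>Basis. (y \<bullet> blinfun_apply (blinfun_apply H i) u) *\<^sub>R i)"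

end

theory Submission
  imports Defs
begin

definition "pcone C \<longleftrightarrow> (\<forall>c>0. \<forall>v\<in>C. (c::real) *\<^sub>R v \<in> C)"

lemma halfspace_local:
  fixes a y :: "'a::euclidean_space"
  assumes "a \<noteq> 0"
  shows "\<exists>Cp e. e > 0 \<and> polyhedron Cp \<and> pcone Cp \<and>
     (\<forall>v. norm v < e \<longrightarrow> (y + v \<in> {x. a \<bullet> x \<le> b} \<longleftrightarrow> v \<in> Cp))"
proof -
  have na: "norm a > 0" using assms by simp
  consider "a \<bullet> y < b" | "a \<bullet> y = b" | "a \<bullet> y > b" by linarith
  then show ?thesis
  proof cases
    case 1
    show ?thesis
    proof (intro exI conjI allI impI)
      show "(b - a \<bullet> y) / norm a > 0" using 1 na by simp
      show "polyhedron (UNIV::'a set)" by simp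
      show "pcone (UNIV::'a set)" by (simp add: pcone_def)
      fix v :: 'a assume "norm v < (b - a \<bullet> y) / norm a"
      then have "norm a * norm v < b - a \<bullet> y" using na by (simp add: field_simps)
      moreover have "a \<bullet> v \<le> norm a * norm v" by (simp add: norm_cauchy_schwarz)
      ultimately show "(y + v \<in> {x. a \<bullet> x \<le> b}) = (v \<in> UNIV)" by (simp add: inner_add_right)
    qed
  next
    case 2
    show ?thesis
    proof (intro exI conjI allI impI)
      show "(1::real) > 0" by simp
      show "polyhedron {v. a \<bullet> v \<le> 0}" by (rule polyhedron_halfspace_le)
      show "pcone {v. a \<bullet> v \<le> 0}" by (auto simp: pcone_def mult_nonneg_nonpos)
      fix v :: 'a
      show "(y + v \<in> {x. a \<bullet> x \<le> b}) = (v \<in> {v. a \<bullet> v \<le> 0})" using 2 by (simp add: inner_add_right)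
    qed
  next
    case 3
    show ?thesis
    proof (intro exI conjI allI impI)
      show "(a \<bullet> y - b) / norm a > 0" using 3 na by simp
      show "polyhedron ({}::'a set)" by simp
      show "pcone ({}::'a set)" by (simp add: pcone_def)
      fix v :: 'a assume "norm v < (a \<bullet> y - b) / norm a"
      then have "norm a * norm v < a \<bullet> y - b" using na by (simp add: field_simps)
      moreover have "- (a \<bullet> v) \<le> norm a * norm v"
        using norm_cauchy_schwarz[of a "-v"] by simp
      ultimately show "(y + v \<in> {x. a \<bullet> x \<le> b}) = (v \<in> {})" by (simp add: inner_add_right)
    qed
  qed
qed

lemma polyhedron_local:
  fixes y :: "'a::euclidean_space"
  assumes "polyhedron P"
  shows "\<exists>Cp e. e > 0 \<and> polyhedron Cp \<and> pcone Cp \<and>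
     (\<forall>v. norm v < e \<longrightarrow> (y + v \<in> P \<longleftrightarrow> v \<in> Cp))"
proof -
  obtain F where F: "finite F" "P = \<Inter>F" "\<forall>h\<in>F. \<exists>a b. a \<noteq> 0 \<and> h = {x. a \<bullet> x \<le> b}"
    using assms unfolding polyhedron_def by blast
  have "\<exists>Cp e. e > 0 \<and> polyhedron Cp \<and> pcone Cp \<and>
     (\<forall>v. norm v < e \<longrightarrow> (y + v \<in> \<Inter>F \<longleftrightarrow> v \<in> Cp))"
    using F(1,3)
  proof (induction F rule: finite_induct)
    case empty
    show ?case by (rule exI[of _ UNIV], rule exI[of _ 1]) (simp add: pcone_def)
  next
    case (insert h F)
    obtain a b where ab: "a \<noteq> 0" "h = {x. a \<bullet> x \<le> b}" using insert.prems by blast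
    obtain C1 e1 where 1: "e1 > 0" "polyhedron C1" "pcone C1"
      "\<forall>v. norm v < e1 \<longrightarrow> (y + v \<in> h \<longleftrightarrow> v \<in> C1)"
      using halfspace_local[OF ab(1), of y b] ab(2) by blast
    obtain C2 e2 where 2: "e2 > 0" "polyhedron C2" "pcone C2"
      "\<forall>v. norm v < e2 \<longrightarrow> (y + v \<in> \<Inter>F \<longleftrightarrow> v \<in> C2)"
      using insert.IH insert.prems by blast
    show ?case
      apply (rule exI[of _ "C1 \<inter> C2"], rule exI[of _ "min e1 e2"])
      using 1 2 by (auto simp: pcone_def)
  qed
  then show ?thesis using F(2) by simp
qed

lemma locpoly_local:
  fixes y :: "'a::euclidean_space"
  assumes "locally_polyhedral_at Q y"
  shows "\<exists>G e. e > 0 \<and> finite G \<and> (\<forall>P\<in>G. polyhedron P) \<and> pcone (\<Union>G) \<and>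
     (\<forall>v. norm v < e \<longrightarrow> (y + v \<in> Q \<longleftrightarrow> v \<in> \<Union>G))"
proof -
  obtain V F where VF: "open V" "y \<in> V" "finite F" "\<forall>P\<in>F. polyhedron P" "Q \<inter> V = \<Union>F"
    using assms unfolding locally_polyhedral_at_def by blast
  obtain eV where eV: "eV > 0" "ball y eV \<subseteq> V" using VF(1,2) open_contains_ball by blast
  have "\<forall>P\<in>F. \<exists>Cp e. e > 0 \<and> polyhedron Cp \<and> pcone Cp \<and>
     (\<forall>v. norm v < e \<longrightarrow> (y + v \<in> P \<longleftrightarrow> v \<in> Cp))"
    using VF(4) polyhedron_local by blast
  then obtain CP eP where CP: "\<And>P. P \<in> F \<Longrightarrow> eP P > 0 \<and> polyhedron (CP P) \<and> pcone (CP P) \<and>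
     (\<forall>v. norm v < eP P \<longrightarrow> (y + v \<in> P \<longleftrightarrow> v \<in> CP P))"
    by metis
  define e where "e = Min (insert eV (eP ` F))"
  have epos: "e > 0" unfolding e_def using VF(3) eV(1) CP by (auto simp: Min_gr_iff)
  have eleV: "e \<le> eV" unfolding e_def using VF(3) by simp
  have eleP: "\<And>P. P \<in> F \<Longrightarrow> e \<le> eP P" unfolding e_def using VF(3) by simp
  show ?thesis
  proof (intro exI conjI allI impI)
    show "e > 0" by (rule epos)
    show "finite (CP ` F)" using VF(3) by simp
    show "\<forall>P\<in>CP ` F. polyhedron P" using CP by auto
    show "pcone (\<Union>(CP ` F))" using CP unfolding pcone_def by fast
    fix v :: 'a assume nv: "norm v < e"
    then have "y + v \<in> V" using eV eleV by (auto simp: dist_norm)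
    then have "y + v \<in> Q \<longleftrightarrow> y + v \<in> \<Union>F" using VF(5) by blast
    also have "\<dots> \<longleftrightarrow> v \<in> \<Union>(CP ` F)"
    proof -
      have "\<And>P. P \<in> F \<Longrightarrow> (y + v \<in> P \<longleftrightarrow> v \<in> CP P)"
        using CP eleP nv by (meson less_le_trans)
      then show ?thesis by blast
    qed
    finally show "y + v \<in> Q \<longleftrightarrow> v \<in> \<Union>(CP ` F)" .
  qed
qed

lemma tseq:
  fixes x :: "nat \<Rightarrow> 'a::real_normed_vector"
  assumes "e > (0::real)"
  defines "t \<equiv> (\<lambda>k. e / (2 * (norm (x k) + 1) * (real k + 1)))"
  shows "\<forall>k. t k > 0" "t \<longlonglongrightarrow> 0" "\<forall>k. norm (t k *\<^sub>R x k) < e"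
    "(\<lambda>k. t k *\<^sub>R x k) \<longlonglongrightarrow> 0"
proof -
  have tp: "t k > 0" for k using assms(1) unfolding t_def
    by (intro divide_pos_pos mult_pos_pos) (auto simp: add_nonneg_pos)
  show "\<forall>k. t k > 0" using tp by blast
  have tle: "t k \<le> e / (real k + 1)" for k
  proof -
    have "e / (2 * (norm (x k) + 1) * (real k + 1)) \<le> e / (real k + 1)"
      using assms(1) by (intro divide_left_mono) (auto intro!: mult_pos_pos, smt (verit) mult_le_cancel_right1 norm_ge_zero of_nat_0_le_iff)
    then show ?thesis unfolding t_def .
  qed
  have nt: "norm (t k *\<^sub>R x k) \<le> e / (2 * (real k + 1))" for k
  proof -
    have "norm (t k *\<^sub>R x k) = e * norm (x k) / (2 * (norm (x k) + 1) * (real k + 1))"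
      using tp[of k] assms(1) unfolding t_def by (simp add: abs_of_pos)
    also have "\<dots> \<le> e * (norm (x k) + 1) / (2 * (norm (x k) + 1) * (real k + 1))"
      using assms(1) by (intro divide_right_mono mult_left_mono) auto
    also have "\<dots> = e / (2 * (real k + 1))"
    proof -
      have h: "norm (x k) + 1 \<noteq> 0" by (smt (verit) norm_ge_zero)
      have h2: "real k + 1 \<noteq> 0" by simp
      have "e * (norm (x k) + 1) / (2 * (norm (x k) + 1) * (real k + 1)) =
            ((norm (x k) + 1) * e) / ((norm (x k) + 1) * (2 * (real k + 1)))"
        by (simp only: mult.commute mult.left_commute mult.assoc)
      also have "\<dots> = e / (2 * (real k + 1))"
        using h by (rule nonzero_mult_divide_mult_cancel_left)
      finally show ?thesis .
    qed
    finally show ?thesis .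
  qed
  have lim0: "(\<lambda>k. c / (real k + 1)) \<longlonglongrightarrow> 0" for c :: real
    using LIMSEQ_Suc[OF lim_const_over_n[of c]] by (simp add: add.commute)
  show "t \<longlonglongrightarrow> 0"
    by (rule Lim_null_comparison[OF _ lim0[of e]]) (use tp tle in \<open>auto intro!: always_eventually simp: less_imp_le\<close>)
  show "\<forall>k. norm (t k *\<^sub>R x k) < e"
  proof
    fix k
    have "e / (2 * (real k + 1)) < e" using assms(1) by (simp add: field_simps add_pos_nonneg)
    then show "norm (t k *\<^sub>R x k) < e" using nt[of k] by linarith
  qed
  show "(\<lambda>k. t k *\<^sub>R x k) \<longlonglongrightarrow> 0"
  proof (rule Lim_null_comparison[OF _ lim0[of "e/2"]])
    show "\<forall>\<^sub>F k in sequentially. norm (t k *\<^sub>R x k) \<le> e / 2 / (real k + 1)"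
      using nt by (auto intro!: always_eventually simp: field_simps)
  qed
qed

lemma frechet_cone_perp:
  fixes C :: "'a::real_inner set"
  assumes "pcone C" "\<eta> \<in> frechet_normal_cone C x"
  shows "\<eta> \<bullet> x = 0"
proof (rule ccontr)
  assume ne: "\<eta> \<bullet> x \<noteq> 0"
  have xC: "x \<in> C" using assms(2) by (simp add: frechet_normal_cone_def)
  have x0: "x \<noteq> 0" using ne by auto
  then have nx: "norm x > 0" by simp
  define \<epsilon> where "\<epsilon> = \<bar>\<eta> \<bullet> x\<bar> / (2 * norm x)"
  have ep: "\<epsilon> > 0" using ne nx by (simp add: \<epsilon>_def)
  obtain \<delta> where d: "\<delta> > 0" "\<forall>x'\<in>C. norm (x' - x) < \<delta> \<longrightarrow> \<eta> \<bullet> (x' - x) \<le> \<epsilon> * norm (x' - x)"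
    using assms(2) ep unfolding frechet_normal_cone_def by blast
  define t where "t = min (1/2) (\<delta> / (2 * norm x))"
  have tp: "t > 0" "t \<le> 1/2" using d(1) nx by (auto simp: t_def)
  have tn: "t * norm x < \<delta>"
  proof -
    have "t * norm x \<le> \<delta> / (2 * norm x) * norm x" using nx by (intro mult_right_mono) (auto simp: t_def)
    also have "\<dots> = \<delta> / 2" using nx by simp
    finally show ?thesis using d(1) by linarith
  qed
  define s where "s = (if \<eta> \<bullet> x > 0 then 1 else -1::real)"
  have sabs: "\<bar>s\<bar> = 1" "s * (\<eta> \<bullet> x) = \<bar>\<eta> \<bullet> x\<bar>" by (auto simp: s_def)
  define x' where "x' = (1 + s * t) *\<^sub>R x"
  have pos: "1 + s * t > 0" using tp sabs(1) by (auto simp: abs_if split: if_splits)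
  have x'C: "x' \<in> C" using assms(1) xC pos by (simp add: pcone_def x'_def)
  have dx: "x' - x = (s * t) *\<^sub>R x" by (simp add: x'_def algebra_simps)
  have ndx: "norm (x' - x) = t * norm x" using dx tp sabs(1) by (simp add: abs_mult)
  have "\<eta> \<bullet> (x' - x) \<le> \<epsilon> * norm (x' - x)" using d(2) x'C ndx tn by auto
  moreover have "\<eta> \<bullet> (x' - x) = t * \<bar>\<eta> \<bullet> x\<bar>" using dx sabs(2) by (simp add: algebra_simps)
  moreover have "\<epsilon> * norm (x' - x) = t * \<bar>\<eta> \<bullet> x\<bar> / 2" using ndx nx by (simp add: \<epsilon>_def)
  moreover have "t * \<bar>\<eta> \<bullet> x\<bar> > 0" using tp ne by simp
  ultimately show False by linarith
qed

lemma frechet_cone_scale: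
  fixes C :: "'a::real_inner set"
  assumes "pcone C" "c > 0" "\<eta> \<in> frechet_normal_cone C x"
  shows "\<eta> \<in> frechet_normal_cone C (c *\<^sub>R x)"
  unfolding frechet_normal_cone_def
proof (intro CollectI conjI allI impI)
  have xC: "x \<in> C" using assms(3) by (simp add: frechet_normal_cone_def)
  show "c *\<^sub>R x \<in> C" using assms(1,2) xC by (simp add: pcone_def)
  fix \<epsilon> :: real assume ep: "\<epsilon> > 0"
  obtain \<delta> where d: "\<delta> > 0" "\<forall>x'\<in>C. norm (x' - x) < \<delta> \<longrightarrow> \<eta> \<bullet> (x' - x) \<le> \<epsilon> * norm (x' - x)"
    using assms(3) ep unfolding frechet_normal_cone_def by blast
  show "\<exists>\<delta>>0. \<forall>x'\<in>C. norm (x' - c *\<^sub>R x) < \<delta> \<longrightarrow> \<eta> \<bullet> (x' - c *\<^sub>R x) \<le> \<epsilon> * norm (x' - c *\<^sub>R x)"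
  proof (intro exI[of _ "c * \<delta>"] conjI ballI impI)
    show "c * \<delta> > 0" using assms(2) d(1) by simp
    fix x' assume x'C: "x' \<in> C" and nx: "norm (x' - c *\<^sub>R x) < c * \<delta>"
    have eq: "x' - c *\<^sub>R x = c *\<^sub>R (inverse c *\<^sub>R x' - x)" using assms(2) by (simp add: algebra_simps)
    have yC: "inverse c *\<^sub>R x' \<in> C" using assms(1,2) x'C by (simp add: pcone_def)
    have "norm (inverse c *\<^sub>R x' - x) < \<delta>" using nx eq assms(2) by (simp add: abs_of_pos)
    then have "\<eta> \<bullet> (inverse c *\<^sub>R x' - x) \<le> \<epsilon> * norm (inverse c *\<^sub>R x' - x)" using d(2) yC by blast
    then have "c * (\<eta> \<bullet> (inverse c *\<^sub>R x' - x)) \<le> c * (\<epsilon> * norm (inverse c *\<^sub>R x' - x))"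
      using assms(2) by simp
    moreover have "c * (\<eta> \<bullet> (inverse c *\<^sub>R x' - x)) = \<eta> \<bullet> (x' - c *\<^sub>R x)"
      by (subst eq) simp
    moreover have "c * (\<epsilon> * norm (inverse c *\<^sub>R x' - x)) = \<epsilon> * norm (x' - c *\<^sub>R x)"
      by (subst eq) (use assms(2) in \<open>simp add: abs_of_pos\<close>)
    ultimately show "\<eta> \<bullet> (x' - c *\<^sub>R x) \<le> \<epsilon> * norm (x' - c *\<^sub>R x)" by simp
  qed
qed

lemma frechet_local:
  fixes Q C :: "'a::real_inner set"
  assumes "\<forall>v. norm v < e \<longrightarrow> (y + v \<in> Q \<longleftrightarrow> v \<in> C)" "norm v < e"
    "\<eta> \<in> frechet_normal_cone C v"
  shows "\<eta> \<in> frechet_normal_cone Q (y + v)"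
  unfolding frechet_normal_cone_def
proof (intro CollectI conjI allI impI)
  have vC: "v \<in> C" using assms(3) by (simp add: frechet_normal_cone_def)
  show "y + v \<in> Q" using assms(1,2) vC by blast
  fix \<epsilon> :: real assume ep: "\<epsilon> > 0"
  obtain \<delta> where d: "\<delta> > 0" "\<forall>x'\<in>C. norm (x' - v) < \<delta> \<longrightarrow> \<eta> \<bullet> (x' - v) \<le> \<epsilon> * norm (x' - v)"
    using assms(3) ep unfolding frechet_normal_cone_def by blast
  show "\<exists>\<delta>>0. \<forall>x'\<in>Q. norm (x' - (y + v)) < \<delta> \<longrightarrow> \<eta> \<bullet> (x' - (y + v)) \<le> \<epsilon> * norm (x' - (y + v))"
  proof (intro exI[of _ "min \<delta> (e - norm v)"] conjI ballI impI)
    show "min \<delta> (e - norm v) > 0" using d(1) assms(2) by simp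
    fix x' assume x'Q: "x' \<in> Q" and nx: "norm (x' - (y + v)) < min \<delta> (e - norm v)"
    have eq: "x' - (y + v) = (x' - y) - v" by simp
    have "norm (x' - y) \<le> norm (x' - (y + v)) + norm v"
      by (metis eq add.commute diff_add_cancel norm_triangle_ineq)
    then have "norm (x' - y) < e" using nx by simp
    then have "x' - y \<in> C" using assms(1) x'Q by (metis add.commute diff_add_cancel)
    then have "\<eta> \<bullet> ((x' - y) - v) \<le> \<epsilon> * norm ((x' - y) - v)" using d(2) nx eq by auto
    then show "\<eta> \<bullet> (x' - (y + v)) \<le> \<epsilon> * norm (x' - (y + v))" by (simp only: eq)
  qed
qed

lemma seq_S:
  fixes Q C :: "'a::real_inner set"
  assumes "e > 0" "pcone C" "\<forall>v. norm v < e \<longrightarrow> (y + v \<in> Q \<longleftrightarrow> v \<in> C)"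
    "\<forall>k. \<eta>k k \<in> frechet_normal_cone C (xk k)"
  shows "\<exists>t. (\<forall>k. t k > 0) \<and> t \<longlonglongrightarrow> 0 \<and> (\<lambda>k. t k *\<^sub>R xk k) \<longlonglongrightarrow> 0 \<and>
     (\<forall>k. \<eta>k k \<in> frechet_normal_cone Q (y + t k *\<^sub>R xk k))"
proof -
  note T = tseq[OF assms(1), of xk]
  define t where "t = (\<lambda>k. e / (2 * (norm (xk k) + 1) * (real k + 1)))"
  show ?thesis
  proof (intro exI[of _ t] conjI allI)
    show "\<And>k. t k > 0" "t \<longlonglongrightarrow> 0" "(\<lambda>k. t k *\<^sub>R xk k) \<longlonglongrightarrow> 0" using T unfolding t_def by auto
    fix k
    show "\<eta>k k \<in> frechet_normal_cone Q (y + t k *\<^sub>R xk k)"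
      apply (rule frechet_local[OF assms(3)])
      using T assms(4) frechet_cone_scale[OF assms(2)] unfolding t_def by auto
  qed
qed

lemma tangent_LC:
  fixes Q C :: "'a::real_normed_vector set"
  assumes "e > 0" "closed C" "pcone C" "\<forall>v. norm v < e \<longrightarrow> (y + v \<in> Q \<longleftrightarrow> v \<in> C)"
  shows "bouligand_tangent_cone Q y = C"
proof
  show "bouligand_tangent_cone Q y \<subseteq> C"
  proof
    fix v assume "v \<in> bouligand_tangent_cone Q y"
    then obtain t wk where tw: "\<forall>k. t k > (0::real)" "t \<longlonglongrightarrow> 0" "wk \<longlonglongrightarrow> v" "\<forall>k. y + t k *\<^sub>R wk k \<in> Q"
      unfolding bouligand_tangent_cone_def by blast
    have lim0: "(\<lambda>k. t k *\<^sub>R wk k) \<longlonglongrightarrow> 0" using tendsto_scaleR[OF tw(2) tw(3)] by simp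
    have "\<forall>\<^sub>F k in sequentially. norm (t k *\<^sub>R wk k) < e"
      using order_tendstoD(2)[OF tendsto_norm_zero[OF lim0] assms(1)] by simp
    then have "\<forall>\<^sub>F k in sequentially. wk k \<in> C"
    proof (rule eventually_mono)
      fix k assume "norm (t k *\<^sub>R wk k) < e"
      then have "t k *\<^sub>R wk k \<in> C" using assms(4) tw(4) by blast
      then have "inverse (t k) *\<^sub>R (t k *\<^sub>R wk k) \<in> C"
        using assms(3)[unfolded pcone_def, rule_format, OF positive_imp_inverse_positive[OF tw(1)[rule_format]]] by blast
      moreover have "t k \<noteq> 0" using tw(1) by (metis less_irrefl)
      ultimately show "wk k \<in> C" by simp
    qed
    then show "v \<in> C" using Lim_in_closed_set[OF assms(2) _ _ tw(3)] by simp
  qed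
next
  show "C \<subseteq> bouligand_tangent_cone Q y"
  proof
    fix v assume vC: "v \<in> C"
    note T = tseq[OF assms(1), of "\<lambda>_. v"]
    define t where "t = (\<lambda>k::nat. e / (2 * (norm v + 1) * (real k + 1)))"
    show "v \<in> bouligand_tangent_cone Q y"
      unfolding bouligand_tangent_cone_def
    proof (intro CollectI exI[of _ t] exI[of _ "\<lambda>_. v"] conjI allI)
      show "\<And>k. t k > 0" "t \<longlonglongrightarrow> 0" using T unfolding t_def by auto
      show "(\<lambda>_. v) \<longlonglongrightarrow> v" by simp
      fix k
      have "t k *\<^sub>R v \<in> C" using assms(3) vC T unfolding t_def pcone_def by auto
      then show "y + t k *\<^sub>R v \<in> Q" using assms(4) T unfolding t_def by auto
    qed
  qed
qed

lemma limiting_pcone: "pcone (limiting_normal_cone Q x)"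
  unfolding pcone_def
proof (intro allI impI ballI)
  fix c :: real and \<eta> assume c: "c > 0" and "\<eta> \<in> limiting_normal_cone Q x"
  then obtain xk \<eta>k where h: "x \<in> Q" "\<forall>k. \<eta>k k \<in> frechet_normal_cone Q (xk k)" "xk \<longlonglongrightarrow> x" "\<eta>k \<longlonglongrightarrow> \<eta>"
    unfolding limiting_normal_cone_def by blast
  have "\<forall>k. c *\<^sub>R \<eta>k k \<in> frechet_normal_cone Q (xk k)"
  proof
    fix k
    have a: "xk k \<in> Q" and b: "\<forall>\<epsilon>>0. \<exists>\<delta>>0. \<forall>x'\<in>Q. norm (x' - xk k) < \<delta> \<longrightarrow>
                 \<eta>k k \<bullet> (x' - xk k) \<le> \<epsilon> * norm (x' - xk k)"
      using h(2) unfolding frechet_normal_cone_def by auto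
    show "c *\<^sub>R \<eta>k k \<in> frechet_normal_cone Q (xk k)"
      unfolding frechet_normal_cone_def
    proof (intro CollectI conjI a allI impI)
      fix \<epsilon> :: real assume "\<epsilon> > 0"
      then obtain \<delta> where d: "\<delta> > 0" "\<forall>x'\<in>Q. norm (x' - xk k) < \<delta> \<longrightarrow>
                 \<eta>k k \<bullet> (x' - xk k) \<le> (\<epsilon> / c) * norm (x' - xk k)"
        using b[rule_format, of "\<epsilon>/c"] c \<open>\<epsilon> > 0\<close> by auto
      show "\<exists>\<delta>>0. \<forall>x'\<in>Q. norm (x' - xk k) < \<delta> \<longrightarrow> c *\<^sub>R \<eta>k k \<bullet> (x' - xk k) \<le> \<epsilon> * norm (x' - xk k)"
      proof (intro exI[of _ \<delta>] conjI ballI impI d(1))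
        fix x' assume "x' \<in> Q" "norm (x' - xk k) < \<delta>"
        then have "\<eta>k k \<bullet> (x' - xk k) \<le> (\<epsilon> / c) * norm (x' - xk k)" using d(2) by blast
        then show "c *\<^sub>R \<eta>k k \<bullet> (x' - xk k) \<le> \<epsilon> * norm (x' - xk k)" using c by (simp add: pos_le_divide_eq mult.commute)
      qed
    qed
  qed
  moreover have "(\<lambda>k. c *\<^sub>R \<eta>k k) \<longlonglongrightarrow> c *\<^sub>R \<eta>" by (intro tendsto_intros h(4))
  ultimately show "c *\<^sub>R \<eta> \<in> limiting_normal_cone Q x"
    unfolding limiting_normal_cone_def using h(1,3)
    by (intro CollectI conjI exI[of _ xk] exI[of _ "\<lambda>k. c *\<^sub>R \<eta>k k"]) auto
qed

lemma limiting_cone_perp: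
  fixes C :: "'a::real_inner set"
  assumes "pcone C" "\<eta> \<in> limiting_normal_cone C x"
  shows "\<eta> \<bullet> x = 0"
proof -
  obtain xk \<eta>k where h: "\<forall>k. \<eta>k k \<in> frechet_normal_cone C (xk k)" "xk \<longlonglongrightarrow> x" "\<eta>k \<longlonglongrightarrow> \<eta>"
    using assms(2) unfolding limiting_normal_cone_def by blast
  have "(\<lambda>k. \<eta>k k \<bullet> xk k) \<longlonglongrightarrow> \<eta> \<bullet> x" by (intro tendsto_intros h)
  moreover have "(\<lambda>k. \<eta>k k \<bullet> xk k) = (\<lambda>k. 0)" using frechet_cone_perp[OF assms(1)] h(1) by auto
  ultimately have "(\<lambda>k. 0::real) \<longlonglongrightarrow> \<eta> \<bullet> x" by simp
  then show ?thesis using LIMSEQ_unique[OF _ tendsto_const] by metis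
qed

lemma tangent_perp:
  fixes S :: "'a::real_inner set"
  assumes "S \<subseteq> {p. p \<bullet> a = 0}" "y \<bullet> a = 0" "z \<in> bouligand_tangent_cone S y"
  shows "z \<bullet> a = 0"
proof -
  obtain t zk where tw: "\<forall>k. t k > (0::real)" "zk \<longlonglongrightarrow> z" "\<forall>k. y + t k *\<^sub>R zk k \<in> S"
    using assms(3) unfolding bouligand_tangent_cone_def by blast
  have "\<forall>k. zk k \<bullet> a = 0"
  proof
    fix k
    have "(y + t k *\<^sub>R zk k) \<bullet> a = 0" using assms(1) tw(3) by blast
    then have "t k * (zk k \<bullet> a) = 0" using assms(2) by (simp add: inner_add_left)
    moreover have "t k \<noteq> 0" using tw(1) by (metis less_irrefl)
    ultimately show "zk k \<bullet> a = 0" by simp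
  qed
  moreover have "(\<lambda>k. zk k \<bullet> a) \<longlonglongrightarrow> z \<bullet> a" by (intro tendsto_intros tw)
  ultimately have "(\<lambda>k. 0::real) \<longlonglongrightarrow> z \<bullet> a" by simp
  then show ?thesis using LIMSEQ_unique[OF _ tendsto_const] by metis
qed

lemma tangent_zero_sub:
  fixes S :: "'a::real_normed_vector set"
  assumes "closed S" "pcone S" "z \<in> bouligand_tangent_cone S 0"
  shows "z \<in> S"
proof -
  obtain t zk where tw: "\<forall>k. t k > (0::real)" "zk \<longlonglongrightarrow> z" "\<forall>k. 0 + t k *\<^sub>R zk k \<in> S"
    using assms(3) unfolding bouligand_tangent_cone_def by blast
  have "\<forall>k. zk k \<in> S"
  proof
    fix k
    have "t k *\<^sub>R zk k \<in> S" using tw(3) by simp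
    then have "inverse (t k) *\<^sub>R (t k *\<^sub>R zk k) \<in> S"
      using assms(2)[unfolded pcone_def, rule_format, OF positive_imp_inverse_positive[OF tw(1)[rule_format]]] by blast
    moreover have "t k \<noteq> 0" using tw(1) by (metis less_irrefl)
    ultimately show "zk k \<in> S" by simp
  qed
  then show ?thesis using closed_sequentially[OF assms(1)] tw(2) by blast
qed

lemma hess_inner:
  fixes H :: "'a::euclidean_space \<Rightarrow>\<^sub>L ('a \<Rightarrow>\<^sub>L 'b::real_inner)"
  shows "hess_lag_apply H y u \<bullet> u = y \<bullet> H u u"
proof -
  have "hess_lag_apply H y u \<bullet> u = (\<Sum>i\<in>Basis. (y \<bullet> H i u) * (i \<bullet> u))"
    unfolding hess_lag_apply_def by (simp add: inner_sum_left)
  also have "\<dots> = y \<bullet> (\<Sum>i\<in>Basis. (i \<bullet> u) *\<^sub>R H i u)"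
    by (simp add: inner_sum_right mult.commute)
  also have "(\<Sum>i\<in>Basis. (i \<bullet> u) *\<^sub>R H i u) = H (\<Sum>i\<in>Basis. (i \<bullet> u) *\<^sub>R i) u"
    by (simp only: blinfun.sum_right blinfun.sum_left blinfun.scaleR_right blinfun.scaleR_left)
  also have "(\<Sum>i\<in>Basis. (i \<bullet> u) *\<^sub>R i) = (\<Sum>i\<in>Basis. (u \<bullet> i) *\<^sub>R i)"
    by (rule sum.cong) (auto simp: inner_commute)
  also have "\<dots> = u" by (rule euclidean_representation)
  finally show ?thesis .
qed

lemma hess_zero: "hess_lag_apply H 0 u = 0"
  unfolding hess_lag_apply_def by simp

lemma limiting_closed:
  fixes Q :: "'a::real_inner set"
  shows "closed (limiting_normal_cone Q x)"
  unfolding closed_sequential_limits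
proof (intro allI impI, elim conjE)
  fix f l assume fS: "\<forall>n. f n \<in> limiting_normal_cone Q x" and fl: "f \<longlonglongrightarrow> l"
  have "\<forall>n. \<exists>X E. E \<in> frechet_normal_cone Q X \<and> dist X x < 1 / real (Suc n) \<and> dist E (f n) < 1 / real (Suc n)"
  proof
    fix n
    obtain xk \<eta>k where h: "\<forall>k. \<eta>k k \<in> frechet_normal_cone Q (xk k)" "xk \<longlonglongrightarrow> x" "\<eta>k \<longlonglongrightarrow> f n"
      using fS unfolding limiting_normal_cone_def by blast
    have r: "1 / real (Suc n) > 0" by simp
    have "\<forall>\<^sub>F k in sequentially. dist (xk k) x < 1 / real (Suc n) \<and> dist (\<eta>k k) (f n) < 1 / real (Suc n)"
      by (rule eventually_conj[OF h(2)[unfolded tendsto_iff, rule_format, OF r] h(3)[unfolded tendsto_iff, rule_format, OF r]])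
    then obtain N where "\<forall>k\<ge>N. dist (xk k) x < 1 / real (Suc n) \<and> dist (\<eta>k k) (f n) < 1 / real (Suc n)"
      unfolding eventually_sequentially by blast
    then have "dist (xk N) x < 1 / real (Suc n) \<and> dist (\<eta>k N) (f n) < 1 / real (Suc n)" by blast
    then show "\<exists>X E. E \<in> frechet_normal_cone Q X \<and> dist X x < 1 / real (Suc n) \<and> dist E (f n) < 1 / real (Suc n)"
      using h(1) by blast
  qed
  then obtain X where "\<forall>n. \<exists>E. E \<in> frechet_normal_cone Q (X n) \<and> dist (X n) x < 1 / real (Suc n) \<and> dist E (f n) < 1 / real (Suc n)"
    by (rule choice[THEN exE])
  then obtain E where XE': "\<forall>n. E n \<in> frechet_normal_cone Q (X n) \<and> dist (X n) x < 1 / real (Suc n) \<and> dist (E n) (f n) < 1 / real (Suc n)"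
    by (rule choice[THEN exE])
  then have XE: "\<And>n. E n \<in> frechet_normal_cone Q (X n)" "\<And>n. dist (X n) x < 1 / real (Suc n)"
    "\<And>n. dist (E n) (f n) < 1 / real (Suc n)" by auto
  have "(\<lambda>n. X n - x) \<longlonglongrightarrow> 0" by (rule LIMSEQ_norm_0) (use XE(2) in \<open>simp add: dist_norm\<close>)
  then have Xl: "X \<longlonglongrightarrow> x" by (rule LIM_zero_cancel)
  have "(\<lambda>n. E n - f n) \<longlonglongrightarrow> 0" by (rule LIMSEQ_norm_0) (use XE(3) in \<open>simp add: dist_norm\<close>)
  then have "(\<lambda>n. (E n - f n) + f n) \<longlonglongrightarrow> 0 + l" by (intro tendsto_add fl)
  then have El: "E \<longlonglongrightarrow> l" by simp
  have xQ: "x \<in> Q" using fS unfolding limiting_normal_cone_def by blast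
  show "l \<in> limiting_normal_cone Q x"
    unfolding limiting_normal_cone_def using xQ XE(1) Xl El by blast
qed

theorem mainTheorem15:
  fixes g :: "'a::euclidean_space \<Rightarrow> real ^ 'm"
    and Dg :: "'a \<Rightarrow> ('a \<Rightarrow>\<^sub>L (real ^ 'm))"
    and D2g :: "'a \<Rightarrow> ('a \<Rightarrow>\<^sub>L ('a \<Rightarrow>\<^sub>L (real ^ 'm)))"
    and D :: "(real ^ 'm) set"
    and xbar u :: 'a
  assumes g_deriv: "\<And>x. (g has_derivative blinfun_apply (Dg x)) (at x)"
    and Dg_deriv: "\<And>x. (Dg has_derivative blinfun_apply (D2g x)) (at x)"
    and D2g_cont: "continuous_on UNIV D2g"
    and D_closed: "closed D"
    and D_poly: "locally_polyhedral_at D (g xbar)"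
    and feasible: "g xbar \<in> D"
    and u_unit: "norm u = 1"
    and SOSCMS: "\<And>ys. ys \<in> dir_limiting_normal_cone D (g xbar) (Dg xbar u) \<Longrightarrow>
                   adjoint (blinfun_apply (Dg xbar)) ys = 0 \<Longrightarrow>
                   ys \<bullet> D2g xbar u u \<ge> 0 \<Longrightarrow> ys = 0"
  defines "K \<equiv> limiting_normal_cone (bouligand_tangent_cone D (g xbar)) (Dg xbar u)"
    and "T \<equiv> bouligand_tangent_cone (bouligand_tangent_cone D (g xbar)) (Dg xbar u)"
    and "w \<equiv> (\<lambda>s v. Dg xbar s + (1/2) *\<^sub>R D2g xbar u u - v)"
  shows
    "(\<forall>s ys zs.
        adjoint (blinfun_apply (Dg xbar)) ys = 0 \<longrightarrow>
        hess_lag_apply (D2g xbar) ys u + adjoint (blinfun_apply (Dg xbar)) zs = 0 \<longrightarrow>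
        ys \<in> limiting_normal_cone T (w s 0) \<longrightarrow>
        zs \<in> bouligand_tangent_cone (limiting_normal_cone T (w s 0)) ys \<longrightarrow>
        ys = 0)
     \<and> (\<forall>xs s ys zs v.
        ys \<bullet> v \<ge> 0 \<longrightarrow>
        xs = hess_lag_apply (D2g xbar) ys u + adjoint (blinfun_apply (Dg xbar)) zs \<longrightarrow>
        ys \<in> limiting_normal_cone T (w s v) \<inter> {y. adjoint (blinfun_apply (Dg xbar)) y = 0} \<longrightarrow>
        zs \<in> bouligand_tangent_cone (limiting_normal_cone T (w s v)) ys \<longrightarrow>
        (\<exists>lam\<in>K. xs = adjoint (blinfun_apply (Dg xbar)) lam))
     \<and> (\<forall>ys zs.
        adjoint (blinfun_apply (Dg xbar)) ys = 0 \<longrightarrow>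
        hess_lag_apply (D2g xbar) ys u + adjoint (blinfun_apply (Dg xbar)) zs = 0 \<longrightarrow>
        ys \<in> K \<longrightarrow>
        zs \<in> bouligand_tangent_cone K ys \<longrightarrow>
        ys = 0)
     \<and> (\<forall>xs ys zs.
        xs \<bullet> u \<ge> 0 \<longrightarrow>
        xs = hess_lag_apply (D2g xbar) ys u + adjoint (blinfun_apply (Dg xbar)) zs \<longrightarrow>
        ys \<in> K \<inter> {y. adjoint (blinfun_apply (Dg xbar)) y = 0} \<longrightarrow>
        zs \<in> bouligand_tangent_cone K ys \<longrightarrow>
        (\<exists>lam\<in>K. xs = adjoint (blinfun_apply (Dg xbar)) lam
                 \<and> lam \<in> limiting_normal_cone D (g xbar)))"
proof -
  define y0 where "y0 = g xbar"
  define a where "a = Dg xbar u"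
  define A where "A = adjoint (blinfun_apply (Dg xbar))"
  have lin: "linear (blinfun_apply (Dg xbar))"
    by (simp add: bounded_linear.linear blinfun.bounded_linear_right)
  have Aw: "\<And>x z. x \<bullet> A z = Dg xbar x \<bullet> z" unfolding A_def by (rule adjoint_works[OF lin])
  obtain G e where Ge: "e > 0" "finite G" "\<forall>P\<in>G. polyhedron P" "pcone (\<Union>G)"
     "\<forall>v. norm v < e \<longrightarrow> (y0 + v \<in> D \<longleftrightarrow> v \<in> \<Union>G)"
    using locpoly_local[OF D_poly] unfolding y0_def by blast
  define C where "C = \<Union>G"
  have Ccl: "closed C" unfolding C_def using Ge(2,3) polyhedron_imp_closed by blast
  have Ccone: "pcone C" using Ge(4) by (simp add: C_def)
  have CLC: "\<forall>v. norm v < e \<longrightarrow> (y0 + v \<in> D \<longleftrightarrow> v \<in> C)" using Ge(5) by (simp add: C_def)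
  have TD: "bouligand_tangent_cone D y0 = C" by (rule tangent_LC[OF Ge(1) Ccl Ccone CLC])
  have Keq: "K = limiting_normal_cone C a" unfolding K_def a_def TD[unfolded y0_def] ..
  have lpC: "locally_polyhedral_at C a"
    unfolding locally_polyhedral_at_def C_def using Ge(2,3) by (intro exI[of _ UNIV] exI[of _ G] conjI) simp_all
  obtain G' e' where Ge': "e' > 0" "finite G'" "\<forall>P\<in>G'. polyhedron P" "pcone (\<Union>G')"
     "\<forall>v. norm v < e' \<longrightarrow> (a + v \<in> C \<longleftrightarrow> v \<in> \<Union>G')"
    using locpoly_local[OF lpC] by blast
  define C' where "C' = \<Union>G'"
  have C'cl: "closed C'" unfolding C'_def using Ge'(2,3) polyhedron_imp_closed by blast
  have C'cone: "pcone C'" using Ge'(4) by (simp add: C'_def)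
  have C'LC: "\<forall>v. norm v < e' \<longrightarrow> (a + v \<in> C \<longleftrightarrow> v \<in> C')" using Ge'(5) by (simp add: C'_def)
  have Teq: "T = C'" unfolding T_def TD[unfolded y0_def] a_def[symmetric]
    by (rule tangent_LC[OF Ge'(1) C'cl C'cone C'LC])
  have Kdir: "\<eta> \<in> dir_limiting_normal_cone D y0 a \<and> \<eta> \<in> limiting_normal_cone D y0" if eK: "\<eta> \<in> K" for \<eta>
  proof -
    obtain xk \<eta>k where h: "\<forall>k. \<eta>k k \<in> frechet_normal_cone C (xk k)" "xk \<longlonglongrightarrow> a" "\<eta>k \<longlonglongrightarrow> \<eta>"
      using eK unfolding Keq limiting_normal_cone_def by blast
    obtain t where t: "\<forall>k. t k > 0" "t \<longlonglongrightarrow> 0" "(\<lambda>k. t k *\<^sub>R xk k) \<longlonglongrightarrow> 0"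
      "\<forall>k. \<eta>k k \<in> frechet_normal_cone D (y0 + t k *\<^sub>R xk k)"
      using seq_S[OF Ge(1) Ccone CLC h(1)] by blast
    have "\<eta> \<in> dir_limiting_normal_cone D y0 a"
      unfolding dir_limiting_normal_cone_def
      by (intro CollectI exI[of _ t] exI[of _ xk] exI[of _ \<eta>k] conjI t(1,2,4) h(2,3))
    moreover have "(\<lambda>k. y0 + t k *\<^sub>R xk k) \<longlonglongrightarrow> y0 + 0" by (intro tendsto_intros t(3))
    then have lim: "(\<lambda>k. y0 + t k *\<^sub>R xk k) \<longlonglongrightarrow> y0" by simp
    have "y0 \<in> D" using feasible y0_def by simp
    then have "\<eta> \<in> limiting_normal_cone D y0"
      unfolding limiting_normal_cone_def
      by (intro CollectI exI[of _ "\<lambda>k. y0 + t k *\<^sub>R xk k"] exI[of _ \<eta>k] conjI t(4) h(3) lim)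
    ultimately show ?thesis by blast
  qed
  have Kperp: "\<eta> \<bullet> a = 0" if "\<eta> \<in> K" for \<eta>
    using limiting_cone_perp[OF Ccone] that Keq by blast
  have Kperp': "K \<subseteq> {p. p \<bullet> a = 0}" using Kperp by blast
  have Kcone: "pcone K" unfolding Keq by (rule limiting_pcone)
  have Kcl: "closed K" unfolding Keq by (rule limiting_closed)
  have NTK: "\<eta> \<in> K" if eN: "\<eta> \<in> limiting_normal_cone T ww" for \<eta> ww
  proof -
    obtain xk \<eta>k where h: "\<forall>k. \<eta>k k \<in> frechet_normal_cone C' (xk k)" "xk \<longlonglongrightarrow> ww" "\<eta>k \<longlonglongrightarrow> \<eta>"
      using eN unfolding Teq limiting_normal_cone_def by blast
    obtain t where t: "\<forall>k. t k > 0" "t \<longlonglongrightarrow> 0" "(\<lambda>k. t k *\<^sub>R xk k) \<longlonglongrightarrow> 0"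
      "\<forall>k. \<eta>k k \<in> frechet_normal_cone C (a + t k *\<^sub>R xk k)"
      using seq_S[OF Ge'(1) C'cone C'LC h(1)] by blast
    have lim: "(\<lambda>k. a + t k *\<^sub>R xk k) \<longlonglongrightarrow> a + 0" by (intro tendsto_intros t(3))
    have allC: "\<forall>k. a + t k *\<^sub>R xk k \<in> C" using t(4) by (simp add: frechet_normal_cone_def)
    have lim': "(\<lambda>k. a + t k *\<^sub>R xk k) \<longlonglongrightarrow> a" using lim by simp
    have "a \<in> C" by (rule closed_sequentially[OF Ccl, OF allC[rule_format] lim'])
    then show ?thesis unfolding Keq limiting_normal_cone_def
      by (intro CollectI exI[of _ "\<lambda>k. a + t k *\<^sub>R xk k"] exI[of _ \<eta>k] conjI t(4) h(3) lim')
  qed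
  have NTsub: "limiting_normal_cone T ww \<subseteq> {p. p \<bullet> a = 0}" for ww using NTK Kperp by blast
  have NTw: "\<eta> \<bullet> ww = 0" if "\<eta> \<in> limiting_normal_cone T ww" for \<eta> ww
    using limiting_cone_perp[OF C'cone] that Teq by blast
  have SOS': "y = 0" if "y \<in> K" "A y = 0" "y \<bullet> D2g xbar u u \<ge> 0" for y
    using SOSCMS[of y] Kdir[OF that(1)] that(2,3) unfolding A_def a_def y0_def by blast
  have Az: "A z \<bullet> u = z \<bullet> a" for z using Aw[of u z] by (simp add: inner_commute a_def)
  have key: "y = 0" if "y \<in> K" "A y = 0" "hess_lag_apply (D2g xbar) y u + A z = 0" "z \<bullet> a = 0" for y z
  proof -
    have "(hess_lag_apply (D2g xbar) y u + A z) \<bullet> u = 0" using that(3) by simp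
    then have "y \<bullet> D2g xbar u u = 0" using hess_inner[of "D2g xbar" y u] Az[of z] that(4)
      by (simp add: inner_add_left)
    then show ?thesis using SOS' that(1,2) by simp
  qed
  have P1: "\<forall>s ys zs.
        adjoint (blinfun_apply (Dg xbar)) ys = 0 \<longrightarrow>
        hess_lag_apply (D2g xbar) ys u + adjoint (blinfun_apply (Dg xbar)) zs = 0 \<longrightarrow>
        ys \<in> limiting_normal_cone T (w s 0) \<longrightarrow>
        zs \<in> bouligand_tangent_cone (limiting_normal_cone T (w s 0)) ys \<longrightarrow>
        ys = 0"
  proof (intro allI impI)
    fix s ys zs
    assume h: "adjoint (blinfun_apply (Dg xbar)) ys = 0"
      "hess_lag_apply (D2g xbar) ys u + adjoint (blinfun_apply (Dg xbar)) zs = 0"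
      "ys \<in> limiting_normal_cone T (w s 0)"
      "zs \<in> bouligand_tangent_cone (limiting_normal_cone T (w s 0)) ys"
    have yK: "ys \<in> K" using NTK h(3) by blast
    have "zs \<bullet> a = 0" using tangent_perp[OF NTsub Kperp[OF yK] h(4)] .
    then show "ys = 0" using key[OF yK] h(1,2) unfolding A_def by blast
  qed
  have P2: "\<forall>xs s ys zs v.
        ys \<bullet> v \<ge> 0 \<longrightarrow>
        xs = hess_lag_apply (D2g xbar) ys u + adjoint (blinfun_apply (Dg xbar)) zs \<longrightarrow>
        ys \<in> limiting_normal_cone T (w s v) \<inter> {y. adjoint (blinfun_apply (Dg xbar)) y = 0} \<longrightarrow>
        zs \<in> bouligand_tangent_cone (limiting_normal_cone T (w s v)) ys \<longrightarrow>
        (\<exists>lam\<in>K. xs = adjoint (blinfun_apply (Dg xbar)) lam)"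
  proof (intro allI impI)
    fix xs s ys zs v
    assume h: "ys \<bullet> v \<ge> 0"
      "xs = hess_lag_apply (D2g xbar) ys u + adjoint (blinfun_apply (Dg xbar)) zs"
      "ys \<in> limiting_normal_cone T (w s v) \<inter> {y. adjoint (blinfun_apply (Dg xbar)) y = 0}"
      "zs \<in> bouligand_tangent_cone (limiting_normal_cone T (w s v)) ys"
    have yN: "ys \<in> limiting_normal_cone T (w s v)" and yA: "A ys = 0" using h(3) unfolding A_def by auto
    have yK: "ys \<in> K" using NTK yN by blast
    have "ys \<bullet> w s v = 0" using NTw[OF yN] .
    moreover have "ys \<bullet> Dg xbar s = 0" using Aw[of s ys] yA by (simp add: inner_commute)
    ultimately have "(1/2) * (ys \<bullet> D2g xbar u u) - ys \<bullet> v = 0"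
      unfolding w_def by (simp add: inner_add_right inner_diff_right)
    then have "ys \<bullet> D2g xbar u u \<ge> 0" using h(1) by linarith
    then have y0': "ys = 0" using SOS' yK yA by blast
    have zN: "zs \<in> limiting_normal_cone T (w s v)"
      using tangent_zero_sub[OF limiting_closed limiting_pcone] h(4) y0' by blast
    show "\<exists>lam\<in>K. xs = adjoint (blinfun_apply (Dg xbar)) lam"
      using NTK[OF zN] h(2) y0' by (intro bexI[of _ zs]) (simp_all add: hess_zero)
  qed
  have P3: "\<forall>ys zs.
        adjoint (blinfun_apply (Dg xbar)) ys = 0 \<longrightarrow>
        hess_lag_apply (D2g xbar) ys u + adjoint (blinfun_apply (Dg xbar)) zs = 0 \<longrightarrow>
        ys \<in> K \<longrightarrow>
        zs \<in> bouligand_tangent_cone K ys \<longrightarrow>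
        ys = 0"
  proof (intro allI impI)
    fix ys zs
    assume h: "adjoint (blinfun_apply (Dg xbar)) ys = 0"
      "hess_lag_apply (D2g xbar) ys u + adjoint (blinfun_apply (Dg xbar)) zs = 0"
      "ys \<in> K" "zs \<in> bouligand_tangent_cone K ys"
    have "zs \<bullet> a = 0" using tangent_perp[OF Kperp' Kperp[OF h(3)] h(4)] .
    then show "ys = 0" using key[OF h(3)] h(1,2) unfolding A_def by blast
  qed
  have P4: "\<forall>xs ys zs.
        xs \<bullet> u \<ge> 0 \<longrightarrow>
        xs = hess_lag_apply (D2g xbar) ys u + adjoint (blinfun_apply (Dg xbar)) zs \<longrightarrow>
        ys \<in> K \<inter> {y. adjoint (blinfun_apply (Dg xbar)) y = 0} \<longrightarrow>
        zs \<in> bouligand_tangent_cone K ys \<longrightarrow>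
        (\<exists>lam\<in>K. xs = adjoint (blinfun_apply (Dg xbar)) lam
                 \<and> lam \<in> limiting_normal_cone D (g xbar))"
  proof (intro allI impI)
    fix xs ys zs
    assume h: "xs \<bullet> u \<ge> 0"
      "xs = hess_lag_apply (D2g xbar) ys u + adjoint (blinfun_apply (Dg xbar)) zs"
      "ys \<in> K \<inter> {y. adjoint (blinfun_apply (Dg xbar)) y = 0}"
      "zs \<in> bouligand_tangent_cone K ys"
    have yK: "ys \<in> K" and yA: "A ys = 0" using h(3) unfolding A_def by auto
    have za: "zs \<bullet> a = 0" using tangent_perp[OF Kperp' Kperp[OF yK] h(4)] .
    have "xs \<bullet> u = ys \<bullet> D2g xbar u u"
      using h(2) hess_inner[of "D2g xbar" ys u] Az[of zs] za unfolding A_def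
      by (simp add: inner_add_left)
    then have y0': "ys = 0" using SOS' yK yA h(1) by simp
    have zK: "zs \<in> K" using tangent_zero_sub[OF Kcl Kcone] h(4) y0' by blast
    show "\<exists>lam\<in>K. xs = adjoint (blinfun_apply (Dg xbar)) lam \<and> lam \<in> limiting_normal_cone D (g xbar)"
      using zK Kdir[OF zK] h(2) y0' unfolding y0_def by (intro bexI[of _ zs] conjI) (simp_all add: hess_zero)
  qed
  show ?thesis using P1 P2 P3 P4 by blast
qed

end
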